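(* Let $L>2$, $\Delta=L^{-1}$, $\varepsilon_1=24\exp(-L)$, and define $$\Phi_\pm(x)=L\int_{-1/2\mp\Delta^{1/2}}^{1/2\pm\Delta^{1/2}}\Gamma\big((x-\mu)L\big)\,\mathrm{d}\mu\ \pm\ \varepsilon_1\Gamma(x),$$ where $\Gamma(x)=\exp(-\pi x^2)$. Let $\chi$ be the characteristic function of $[-1/2,1/2)$. Then $\Phi_-(x)\le\chi(x)\le\Phi_+(x)$ for all $x\in\mathbb{R}$, and $$\int_{-\infty}^{\infty}\Phi_\pm(x)\,\mathrm{d}x=1\pm(2\Delta^{1/2}+\varepsilon_1).$$
   Context: In $\Phi_\pm$ the upper signs go with $\Phi_+$ and the lower signs with $\Phi_-$. $\Gamma$ here denotes the Gaussian $\exp(-\pi x^2)$, not Euler's Gamma function. *)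

theory Defs
  imports "HOL-Analysis.Analysis"
begin

definition gauss :: "real \<Rightarrow> real" where
  "gauss x = exp (- pi * x\<^sup>2)"

text \<open>Oriented integral over [a,b] (negated when a > b), as in the usual convention.\<close>
definition Phi_plus :: "real \<Rightarrow> real \<Rightarrow> real" where
  "Phi_plus L x =
     L * (LBINT \<mu>=(-1/2 - sqrt (1/L))..(1/2 + sqrt (1/L)). gauss ((x - \<mu>) * L))
     + 24 * exp (- L) * gauss x"

definition Phi_minus :: "real \<Rightarrow> real \<Rightarrow> real" where
  "Phi_minus L x =
     L * (LBINT \<mu>=(-1/2 + sqrt (1/L))..(1/2 - sqrt (1/L)). gauss ((x - \<mu>) * L))
     - 24 * exp (- L) * gauss x"

definition chi :: "real \<Rightarrow> real" where
  "chi x = (if -1/2 \<le> x \<and> x < 1/2 then 1 else 0)"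

end

theory Submission
  imports Defs "HOL-Probability.Distributions"
begin

definition sgm :: "real \<Rightarrow> real" where "sgm L = 1 / (L * sqrt (2 * pi))"

lemma nd_eq:
  assumes "L > 0"
  shows "L * gauss ((x - \<mu>) * L) = normal_density x (sgm L) \<mu>"
proof -
  have s2: "2 * pi * (sgm L)\<^sup>2 = 1 / L\<^sup>2"
    using assms by (simp add: sgm_def power_divide power_mult_distrib)
  have sq: "sqrt (2 * pi * (sgm L)\<^sup>2) = 1 / L"
    using assms by (simp add: s2 real_sqrt_divide)
  have ex: "-(\<mu> - x)\<^sup>2 / (2 * (sgm L)\<^sup>2) = - pi * ((x - \<mu>) * L)\<^sup>2"
  proof -
    have "2 * (sgm L)\<^sup>2 = 1 / (pi * L\<^sup>2)" using assms by (simp add: sgm_def power_divide power_mult_distrib)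
    then show ?thesis by (simp add: power_mult_distrib power2_commute field_simps power2_eq_square)
  qed
  show ?thesis unfolding normal_density_def gauss_def sq ex using assms by simp
qed

lemma gauss_nd: "gauss y = normal_density 0 (sgm 1) y"
  using nd_eq[of 1 0 y] by (simp add: gauss_def power2_commute)

lemma nd_sym: "normal_density x s \<mu> = normal_density \<mu> s x"
  by (simp add: normal_density_def power2_commute)

lemma sgm_pos: "L > 0 \<Longrightarrow> sgm L > 0"
  by (simp add: sgm_def)

lemma nn_nd: "s > 0 \<Longrightarrow> (\<integral>\<^sup>+y. ennreal (normal_density c s y) \<partial>lborel) = 1"
  by (subst nn_integral_eq_integral) auto

lemma tail_up:
  assumes "L > 0" "T \<ge> 0" "(\<mu> - x) * L \<ge> T"
  shows "normal_density x (sgm L) \<mu> \<le> exp (- pi * T\<^sup>2) * normal_density (x + T / L) (sgm L) \<mu>"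
proof -
  define w where "w = (\<mu> - x) * L"
  have e1: "(x - \<mu>) * L = - w" by (simp add: w_def algebra_simps)
  have e2: "(x + T / L - \<mu>) * L = T - w" using assms(1) by (simp add: w_def field_simps)
  have "w\<^sup>2 \<ge> T\<^sup>2 + (T - w)\<^sup>2"
  proof -
    have "0 \<le> 2 * T * (w - T)" using assms w_def by simp
    then show ?thesis by (simp add: power2_eq_square algebra_simps)
  qed
  then have "pi * (T\<^sup>2 + (T - w)\<^sup>2) \<le> pi * w\<^sup>2" by (rule mult_left_mono) simp
  then have "exp (- pi * (- w)\<^sup>2) \<le> exp (- pi * T\<^sup>2) * exp (- pi * (T - w)\<^sup>2)"
    by (simp add: exp_add[symmetric] algebra_simps)
  then have "L * gauss ((x - \<mu>) * L) \<le> exp (- pi * T\<^sup>2) * (L * gauss ((x + T / L - \<mu>) * L))"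
    using assms(1) unfolding e1 e2 gauss_def by (simp add: mult.left_commute)
  then show ?thesis using nd_eq[OF assms(1)] by simp
qed

lemma tail_down:
  assumes "L > 0" "T \<ge> 0" "(x - \<mu>) * L \<ge> T"
  shows "normal_density x (sgm L) \<mu> \<le> exp (- pi * T\<^sup>2) * normal_density (x - T / L) (sgm L) \<mu>"
proof -
  define w where "w = (x - \<mu>) * L"
  have e2: "(x - T / L - \<mu>) * L = w - T" using assms(1) by (simp add: w_def field_simps)
  have "w\<^sup>2 \<ge> T\<^sup>2 + (w - T)\<^sup>2"
  proof -
    have "0 \<le> 2 * T * (w - T)" using assms w_def by simp
    then show ?thesis by (simp add: power2_eq_square algebra_simps)
  qed
  then have "pi * (T\<^sup>2 + (w - T)\<^sup>2) \<le> pi * w\<^sup>2" by (rule mult_left_mono) simp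
  then have "exp (- pi * w\<^sup>2) \<le> exp (- pi * T\<^sup>2) * exp (- pi * (w - T)\<^sup>2)"
    by (simp add: exp_add[symmetric] algebra_simps)
  then have "L * gauss ((x - \<mu>) * L) \<le> exp (- pi * T\<^sup>2) * (L * gauss ((x - T / L - \<mu>) * L))"
    using assms(1) unfolding e2 gauss_def w_def by (simp add: mult.left_commute)
  then show ?thesis using nd_eq[OF assms(1)] by simp
qed

definition Q :: "real \<Rightarrow> real \<Rightarrow> real \<Rightarrow> real \<Rightarrow> real" where
  "Q L a b x = (\<integral>\<mu>. normal_density x (sgm L) \<mu> * indicator {a<..<b} \<mu> \<partial>lborel)"

lemma Q_int: "L > 0 \<Longrightarrow> integrable lborel (\<lambda>\<mu>. normal_density x (sgm L) \<mu> * indicator {a<..<b} \<mu>)"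
  by (rule integrable_real_mult_indicator) (auto simp: sgm_pos)

lemma Q_nonneg: "Q L a b x \<ge> 0"
  unfolding Q_def by (rule integral_nonneg_AE) (auto split: split_indicator)

lemma Q_le1: assumes that: "L > 0" shows "Q L a b x \<le> 1"
proof -
  have "Q L a b x \<le> (\<integral>\<mu>. normal_density x (sgm L) \<mu> \<partial>lborel)"
    unfolding Q_def using that by (intro integral_mono[OF Q_int]) (auto split: split_indicator simp: sgm_pos)
  then show ?thesis using that by (simp add: sgm_pos)
qed

lemma LBINT_Q:
  assumes "L > 0" "a \<le> b"
  shows "L * (LBINT \<mu>=a..b. gauss ((x - \<mu>) * L)) = Q L a b x"
proof -
  have "L * (LBINT \<mu>=a..b. gauss ((x - \<mu>) * L))
      = L * (\<integral>\<mu>. indicator {a<..<b} \<mu> * gauss ((x - \<mu>) * L) \<partial>lborel)"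
    using assms by (simp add: interval_lebesgue_integral_def set_lebesgue_integral_def)
  also have "\<dots> = (\<integral>\<mu>. L * (indicator {a<..<b} \<mu> * gauss ((x - \<mu>) * L)) \<partial>lborel)"
    by simp
  also have "\<dots> = Q L a b x"
    unfolding Q_def by (rule Bochner_Integration.integral_cong) (auto simp: nd_eq[OF assms(1), symmetric])
  finally show ?thesis .
qed

lemma LBINT_Q':
  assumes "L > 0" "\<not> a \<le> b"
  shows "L * (LBINT \<mu>=a..b. gauss ((x - \<mu>) * L)) = - Q L b a x"
proof -
  have "L * (LBINT \<mu>=a..b. gauss ((x - \<mu>) * L))
      = - (L * (\<integral>\<mu>. indicator {b<..<a} \<mu> * gauss ((x - \<mu>) * L) \<partial>lborel))"
    using assms by (simp add: interval_lebesgue_integral_def set_lebesgue_integral_def)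
  moreover have "(\<integral>\<mu>. indicator {b<..<a} \<mu> * gauss ((x - \<mu>) * L) \<partial>lborel) * L = Q L b a x"
    unfolding Q_def integral_mult_left_zero[symmetric]
    by (rule Bochner_Integration.integral_cong) (auto simp: nd_eq[OF assms(1), symmetric])
  ultimately show ?thesis by (simp add: mult.commute)
qed

lemma Q_has_integral:
  assumes L: "L > 0" and ab: "a \<le> b"
  shows "(Q L a b has_integral (b - a)) UNIV"
proof -
  define F where "F = (\<lambda>x \<mu>. ennreal (normal_density x (sgm L) \<mu> * indicator {a<..<b} \<mu>))"
  have Fm: "case_prod F \<in> borel_measurable (lborel \<Otimes>\<^sub>M lborel)"
    unfolding F_def normal_density_def by measurable
  have meas: "(\<lambda>x. \<integral>\<^sup>+\<mu>. F x \<mu> \<partial>lborel) \<in> borel_measurable lborel"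
    using Fm by (rule lborel.borel_measurable_nn_integral)
  have Qeq: "ennreal (Q L a b x) = (\<integral>\<^sup>+\<mu>. F x \<mu> \<partial>lborel)" for x
  proof -
    have "(\<integral>\<^sup>+\<mu>. F x \<mu> \<partial>lborel) \<le> (\<integral>\<^sup>+\<mu>. ennreal (normal_density x (sgm L) \<mu>) \<partial>lborel)"
      unfolding F_def by (intro nn_integral_mono) (auto split: split_indicator)
    also have "\<dots> = 1" using L by (simp add: nn_nd sgm_pos)
    finally have fin: "(\<integral>\<^sup>+\<mu>. F x \<mu> \<partial>lborel) \<noteq> \<infinity>" by (auto simp: top_unique)
    have "Q L a b x = enn2real (\<integral>\<^sup>+\<mu>. F x \<mu> \<partial>lborel)"
      unfolding Q_def F_def by (rule integral_eq_nn_integral) auto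
    then show ?thesis using fin by (simp add: ennreal_enn2real_if)
  qed
  have Qm: "Q L a b \<in> borel_measurable borel"
  proof -
    have "(\<lambda>x. enn2real (\<integral>\<^sup>+\<mu>. F x \<mu> \<partial>lborel)) \<in> borel_measurable borel"
      using meas by (intro borel_measurable_enn2real) simp
    moreover have "(\<lambda>x. enn2real (\<integral>\<^sup>+\<mu>. F x \<mu> \<partial>lborel)) = Q L a b"
      by (rule ext) (simp add: Qeq[symmetric] Q_nonneg)
    ultimately show ?thesis by simp
  qed
  have inner: "(\<integral>\<^sup>+x. F x \<mu> \<partial>lborel) = indicator {a<..<b} \<mu>" for \<mu>
  proof -
    have "(\<integral>\<^sup>+x. F x \<mu> \<partial>lborel) = (\<integral>\<^sup>+x. ennreal (normal_density \<mu> (sgm L) x) * indicator {a<..<b} \<mu> \<partial>lborel)"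
      unfolding F_def by (intro nn_integral_cong) (auto simp: nd_sym split: split_indicator)
    also have "\<dots> = (\<integral>\<^sup>+x. ennreal (normal_density \<mu> (sgm L) x) \<partial>lborel) * indicator {a<..<b} \<mu>"
      by (intro nn_integral_multc) measurable
    also have "\<dots> = indicator {a<..<b} \<mu>" using L by (simp add: nn_nd sgm_pos)
    finally show ?thesis .
  qed
  have "(\<integral>\<^sup>+x. ennreal (Q L a b x) \<partial>lborel) = (\<integral>\<^sup>+x. (\<integral>\<^sup>+\<mu>. F x \<mu> \<partial>lborel) \<partial>lborel)"
    by (simp add: Qeq)
  also have "\<dots> = (\<integral>\<^sup>+\<mu>. (\<integral>\<^sup>+x. F x \<mu> \<partial>lborel) \<partial>lborel)"
    by (rule lborel_pair.Fubini'[OF Fm, symmetric])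
  also have "\<dots> = (\<integral>\<^sup>+\<mu>. indicator {a<..<b} \<mu> \<partial>lborel)"
    by (simp add: inner)
  also have "\<dots> = ennreal (b - a)" using ab by simp
  finally have nn: "(\<integral>\<^sup>+x. ennreal (Q L a b x) \<partial>lborel) = ennreal (b - a)" .
  show ?thesis
    by (rule nn_integral_has_integral[OF Qm Q_nonneg nn]) (use ab in simp)
qed

lemma Q_ub:
  assumes L: "L > 0" and h: "\<And>\<mu>. normal_density x (sgm L) \<mu> * indicator {a<..<b} \<mu> \<le> c * normal_density y (sgm L) \<mu>"
  shows "Q L a b x \<le> c"
proof -
  have "Q L a b x \<le> (\<integral>\<mu>. c * normal_density y (sgm L) \<mu> \<partial>lborel)"
    unfolding Q_def using L by (intro integral_mono[OF Q_int] h) (auto simp: sgm_pos)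
  then show ?thesis using L by (simp add: sgm_pos)
qed

lemma Q_lb:
  assumes L: "L > 0" and h: "\<And>\<mu>. normal_density x (sgm L) \<mu> \<le> normal_density x (sgm L) \<mu> * indicator {a<..<b} \<mu>
     + c * normal_density y1 (sgm L) \<mu> + c * normal_density y2 (sgm L) \<mu>"
  shows "1 \<le> Q L a b x + 2 * c"
proof -
  have i1: "integrable lborel (normal_density y (sgm L))" for y using L by (simp add: sgm_pos)
  have "(\<integral>\<mu>. normal_density x (sgm L) \<mu> \<partial>lborel) \<le> (\<integral>\<mu>. normal_density x (sgm L) \<mu> * indicator {a<..<b} \<mu>
     + c * normal_density y1 (sgm L) \<mu> + c * normal_density y2 (sgm L) \<mu> \<partial>lborel)"
  proof (rule integral_mono[OF i1 _ h])
    show "integrable lborel (\<lambda>\<mu>. normal_density x (sgm L) \<mu> * indicator {a<..<b} \<mu>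
     + c * normal_density y1 (sgm L) \<mu> + c * normal_density y2 (sgm L) \<mu>)"
      using Q_int[OF L] i1 by auto
  qed
  also have "\<dots> = Q L a b x + c + c"
    unfolding Q_def using L Q_int[OF L] i1
    by (simp add: sgm_pos)
  finally show ?thesis using L by (simp add: sgm_pos)
qed

lemma num:
  assumes "L > 2" "t \<ge> 0"
  shows "L + pi * (t + 1/2)\<^sup>2 \<le> pi * (t * L + sqrt L)\<^sup>2"
proof -
  define r where "r = sqrt L"
  have r2: "r\<^sup>2 = L" using assms by (simp add: r_def)
  have r1: "r \<ge> 1" using assms by (simp add: r_def)
  have e: "(t * L + r)\<^sup>2 = t\<^sup>2 * L\<^sup>2 + 2 * t * L * r + L" using r2 by (simp add: power2_eq_square algebra_simps)
  have "1 * 1 \<le> L * L" using assms by (intro mult_mono) auto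
  then have h1: "t\<^sup>2 * L\<^sup>2 \<ge> t\<^sup>2 * 1"
    using assms by (intro mult_left_mono) (auto simp: power2_eq_square)
  have "L * r \<ge> 1 * 1" using assms r1 by (intro mult_mono) auto
  then have "t * (L * r) \<ge> t * (1 * 1)" using assms by (intro mult_left_mono) auto
  then have h2: "2 * t * L * r \<ge> t" using assms by (simp add: algebra_simps)
  have "(pi - 1) * L \<ge> (pi - 1) * 2" using assms pi_gt3 by (intro mult_left_mono) auto
  then have h3: "pi * L \<ge> L + pi / 4" using pi_gt3 by (simp add: algebra_simps)
  have "pi * (t\<^sup>2 + t) \<le> pi * (t\<^sup>2 * L\<^sup>2 + 2 * t * L * r)"
    using h1 h2 by (intro mult_left_mono) auto
  then show ?thesis unfolding r_def[symmetric] e using h3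
    by (simp add: power2_eq_square algebra_simps)
qed

lemma expb:
  assumes "L > 2" "t \<ge> 0" "x\<^sup>2 \<le> (t + 1/2)\<^sup>2"
  shows "exp (- pi * (t * L + sqrt L)\<^sup>2) \<le> exp (- L) * gauss x"
proof -
  have "L + pi * x\<^sup>2 \<le> L + pi * (t + 1/2)\<^sup>2" using assms(3) by (simp add: mult_left_mono)
  also have "\<dots> \<le> pi * (t * L + sqrt L)\<^sup>2" by (rule num[OF assms(1,2)])
  finally have "exp (- pi * (t * L + sqrt L)\<^sup>2) \<le> exp (- L + - pi * x\<^sup>2)" by simp
  then show ?thesis by (simp add: gauss_def mult_exp_exp)
qed

theorem lemma3p1:
  fixes L :: real
  assumes "L > 2"
  shows "(\<forall>x. Phi_minus L x \<le> chi x \<and> chi x \<le> Phi_plus L x)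
    \<and> (Phi_plus L has_integral (1 + (2 * sqrt (1/L) + 24 * exp (- L)))) UNIV
    \<and> (Phi_minus L has_integral (1 - (2 * sqrt (1/L) + 24 * exp (- L)))) UNIV"
proof -
  have L0: "L > 0" using assms by simp
  define r where "r = sqrt L"
  define d where "d = sqrt (1/L)"
  define e where "e = 24 * exp (- L)"
  have r0: "r > 0" using L0 by (simp add: r_def)
  have rr: "r * r = L" using L0 by (simp add: r_def)
  have dr: "d = 1 / r" by (simp add: d_def r_def real_sqrt_divide)
  have dL: "d * L = r" using rr r0 by (simp add: dr field_simps)
  have d0: "d > 0" using r0 by (simp add: dr)
  have e0: "e > 0" by (simp add: e_def)
  have g0: "gauss x > 0" for x by (simp add: gauss_def)
  have ab: "-1/2 - d \<le> 1/2 + d" using d0 by simp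
  have Pp: "Phi_plus L x = Q L (-1/2 - d) (1/2 + d) x + e * gauss x" for x
    unfolding Phi_plus_def d_def[symmetric] e_def using LBINT_Q[OF L0 ab, of x] by simp
  have Pm: "Phi_minus L x = (if -1/2 + d \<le> 1/2 - d then Q L (-1/2 + d) (1/2 - d) x
             else - Q L (1/2 - d) (-1/2 + d) x) - e * gauss x" for x
    unfolding Phi_minus_def d_def[symmetric] e_def
    using LBINT_Q[OF L0, of "-1/2 + d" "1/2 - d" x] LBINT_Q'[OF L0, of "-1/2 + d" "1/2 - d" x] by simp
  have g_int: "(gauss has_integral 1) UNIV"
  proof -
    have "gauss = normal_density 0 (sgm 1)" by (rule ext) (rule gauss_nd)
    moreover have "(normal_density 0 (sgm 1) has_integral 1) UNIV"
      using has_integral_integral_lborel[of "normal_density 0 (sgm 1)"] by (simp add: sgm_pos)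
    ultimately show ?thesis by simp
  qed
  have ge: "((\<lambda>x. e * gauss x) has_integral e) UNIV"
    using has_integral_mult_right[OF g_int, of e] by simp
  have I1: "(Phi_plus L has_integral (1 + (2 * sqrt (1/L) + 24 * exp (- L)))) UNIV"
  proof -
    have "((\<lambda>x. Q L (-1/2 - d) (1/2 + d) x + e * gauss x) has_integral ((1/2 + d) - (-1/2 - d) + e)) UNIV"
      by (rule has_integral_add[OF Q_has_integral[OF L0 ab] ge])
    moreover have "(\<lambda>x. Q L (-1/2 - d) (1/2 + d) x + e * gauss x) = Phi_plus L" by (rule ext) (simp add: Pp)
    ultimately show ?thesis by (simp add: d_def e_def algebra_simps)
  qed
  have I2: "(Phi_minus L has_integral (1 - (2 * sqrt (1/L) + 24 * exp (- L)))) UNIV"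
  proof (cases "-1/2 + d \<le> 1/2 - d")
    case True
    have "((\<lambda>x. Q L (-1/2 + d) (1/2 - d) x - e * gauss x) has_integral ((1/2 - d) - (-1/2 + d) - e)) UNIV"
      by (rule has_integral_diff[OF Q_has_integral[OF L0 True] ge])
    moreover have "(\<lambda>x. Q L (-1/2 + d) (1/2 - d) x - e * gauss x) = Phi_minus L" by (rule ext) (simp only: Pm if_P[OF True])
    ultimately show ?thesis by (simp add: d_def e_def algebra_simps)
  next
    case False
    then have ba: "1/2 - d \<le> -1/2 + d" by simp
    have "((\<lambda>x. - Q L (1/2 - d) (-1/2 + d) x - e * gauss x) has_integral (- ((-1/2 + d) - (1/2 - d)) - e)) UNIV"
      by (rule has_integral_diff[OF has_integral_neg[OF Q_has_integral[OF L0 ba]] ge])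
    moreover have "(\<lambda>x. - Q L (1/2 - d) (-1/2 + d) x - e * gauss x) = Phi_minus L" by (rule ext) (simp only: Pm if_not_P[OF False])
    ultimately show ?thesis by (simp add: d_def e_def algebra_simps)
  qed
  have ineq: "Phi_minus L x \<le> chi x \<and> chi x \<le> Phi_plus L x" for x
  proof (cases "-1/2 \<le> x \<and> x < 1/2")
    case True
    then have chi1: "chi x = 1" by (simp add: chi_def)
    have lb: "1 \<le> Q L (-1/2 - d) (1/2 + d) x + 2 * exp (- pi * r\<^sup>2)"
    proof (rule Q_lb[OF L0])
      fix \<mu>
      let ?n = "\<lambda>y. normal_density y (sgm L) \<mu>"
      have n0: "0 \<le> exp (- pi * r\<^sup>2) * ?n y" for y by simp
      show "?n x \<le> ?n x * indicator {-1/2 - d<..<1/2 + d} \<mu> + exp (- pi * r\<^sup>2) * ?n (x + r / L)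
             + exp (- pi * r\<^sup>2) * ?n (x - r / L)"
      proof (cases "\<mu> \<in> {-1/2 - d<..<1/2 + d}")
        case True then show ?thesis using n0[of "x + r / L"] n0[of "x - r / L"] by simp
      next
        case False
        then consider "\<mu> \<ge> 1/2 + d" | "\<mu> \<le> -1/2 - d" by fastforce
        then show ?thesis
        proof cases
          case 1
          then have "(\<mu> - x) * L \<ge> d * L" using True L0 by (intro mult_right_mono) auto
          then have "?n x \<le> exp (- pi * r\<^sup>2) * ?n (x + r / L)"
            using r0 dL by (intro tail_up[OF L0]) auto
          moreover have "?n x * indicator {-1/2 - d<..<1/2 + d} \<mu> = 0" using False by simp
          ultimately show ?thesis using n0[of "x - r / L"] by linarith
        next
          case 2
          then have "(x - \<mu>) * L \<ge> d * L" using True L0 by (intro mult_right_mono) auto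
          then have "?n x \<le> exp (- pi * r\<^sup>2) * ?n (x - r / L)"
            using r0 dL by (intro tail_down[OF L0]) auto
          moreover have "?n x * indicator {-1/2 - d<..<1/2 + d} \<mu> = 0" using False by simp
          ultimately show ?thesis using n0[of "x + r / L"] by linarith
        qed
      qed
    qed
    have x2: "x\<^sup>2 \<le> (0 + 1/2)\<^sup>2"
    proof -
      have "(x - 1/2) * (x + 1/2) \<le> 0" using True by (intro mult_nonpos_nonneg) auto
      then show ?thesis by (simp add: power2_eq_square algebra_simps)
    qed
    have "exp (- pi * r\<^sup>2) \<le> exp (- L) * gauss x"
      using expb[OF assms _ x2] by (simp add: r_def)
    moreover have "0 \<le> exp (- L) * gauss x" using g0[of x] by simp
    ultimately have "2 * exp (- pi * r\<^sup>2) \<le> e * gauss x" unfolding e_def by linarith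
    then have up: "chi x \<le> Phi_plus L x" using lb chi1 Pp by simp
    have lo: "Phi_minus L x \<le> chi x"
      using Q_le1[OF L0] Q_nonneg e0 g0[of x] chi1
      by (simp add: Pm) (smt (verit) mult_pos_pos)
    show ?thesis using up lo by simp
  next
    case False
    then have chi0: "chi x = 0" by (simp add: chi_def)
    have up: "chi x \<le> Phi_plus L x"
      using Q_nonneg[of L "-1/2 - d" "1/2 + d" x] e0 g0[of x] chi0 Pp by simp
    have lo: "Phi_minus L x \<le> chi x"
    proof (cases "-1/2 + d \<le> 1/2 - d")
      case False
      then show ?thesis using Q_nonneg[of L "1/2 - d" "-1/2 + d" x] mult_pos_pos[OF e0 g0[of x]] chi0 by (simp add: Pm)
    next
      case True
      have "Q L (-1/2 + d) (1/2 - d) x \<le> exp (- L) * gauss x"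
      proof (cases "x \<ge> 1/2")
        case xg: True
        define t where "t = x - 1/2"
        define T where "T = t * L + r"
        have t0: "t \<ge> 0" using xg by (simp add: t_def)
        have T0: "T \<ge> 0" using t0 L0 r0 by (simp add: T_def)
        have TT: "T = (x - (1/2 - d)) * L" using dL by (simp add: T_def t_def algebra_simps)
        have "Q L (-1/2 + d) (1/2 - d) x \<le> exp (- pi * T\<^sup>2)"
        proof (rule Q_ub[OF L0])
          fix \<mu>
          show "normal_density x (sgm L) \<mu> * indicator {-1/2 + d<..<1/2 - d} \<mu>
              \<le> exp (- pi * T\<^sup>2) * normal_density (x - T / L) (sgm L) \<mu>"
          proof (cases "\<mu> \<in> {-1/2 + d<..<1/2 - d}")
            case True
            then have "(x - \<mu>) * L \<ge> T" unfolding TT using L0 by (intro mult_right_mono) auto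
            then show ?thesis using True tail_down[OF L0 T0] by simp
          qed simp
        qed
        also have "\<dots> \<le> exp (- L) * gauss x"
          unfolding T_def r_def using expb[OF assms t0] by (simp add: t_def)
        finally show ?thesis .
      next
        case xl: False
        then have xl: "x < -1/2" using \<open>\<not> (-1/2 \<le> x \<and> x < 1/2)\<close> by simp
        define t where "t = - x - 1/2"
        define T where "T = t * L + r"
        have t0: "t \<ge> 0" using xl by (simp add: t_def)
        have T0: "T \<ge> 0" using t0 L0 r0 by (simp add: T_def)
        have TT: "T = ((-1/2 + d) - x) * L" using dL by (simp add: T_def t_def algebra_simps)
        have "Q L (-1/2 + d) (1/2 - d) x \<le> exp (- pi * T\<^sup>2)"
        proof (rule Q_ub[OF L0])
          fix \<mu>
          show "normal_density x (sgm L) \<mu> * indicator {-1/2 + d<..<1/2 - d} \<mu>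
              \<le> exp (- pi * T\<^sup>2) * normal_density (x + T / L) (sgm L) \<mu>"
          proof (cases "\<mu> \<in> {-1/2 + d<..<1/2 - d}")
            case True
            then have "(\<mu> - x) * L \<ge> T" unfolding TT using L0 by (intro mult_right_mono) auto
            then show ?thesis using True tail_up[OF L0 T0] by simp
          qed simp
        qed
        also have "\<dots> \<le> exp (- L) * gauss x"
          unfolding T_def r_def using expb[OF assms t0, of x] by (simp add: t_def power2_eq_square algebra_simps)
        finally show ?thesis .
      qed
      moreover have "exp (- L) * gauss x \<le> 24 * exp (- L) * gauss x" using g0[of x] by simp
      ultimately have "Q L (-1/2 + d) (1/2 - d) x \<le> e * gauss x" unfolding e_def by linarith
      then show ?thesis using True chi0 by (simp only: Pm if_P[OF True]) simp
    qed
    show ?thesis using up lo by simp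
  qed
  show ?thesis using ineq I1 I2 by blast
qed

end
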